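(* Let $G_w$ be a half wheel graph with center $w_c$ and outer nodes $w_1,\dots,w_n$, i.e., a directed graph on these nodes with exactly one edge (of arbitrary orientation) between $w_c$ and $w_k$ for each $k\in\{1,\dots,n\}$ and exactly one edge (of arbitrary orientation) between $w_k$ and $w_{k+1}$ for each $k\in\{1,\dots,n-1\}$. Let $G^{\mathcal X}_w$ be any extraction order of $G_w$ rooted at $w_c$, and let $\mathrm{VC}=\{w_k:(w_{k-1},w_k)\in E^{\mathcal X}_w\text{ or }(w_{k+1},w_k)\in E^{\mathcal X}_w\}$. Then $\mathrm{ew}_{\mathcal X}(G^{\mathcal X}_w)=|\mathrm{VC}|+1$.
   Context: An extraction order of a directed graph $G=(V,E)$ is a rooted directed acyclic graph $G^{\mathcal X}=(V,E^{\mathcal X},s)$ in which every node is reachable from $s$ and $E^{\mathcal X}$ is obtained from $E$ by reversing some (possibly no) edges. A confluence from $a$ to $b$ is a pair of directed paths in $E^{\mathcal X}$ from $a$ to $b$ sharing no node other than $a,b$. For $e\in E^{\mathcal X}$, its label set $\mathcal L_e$ is the set of nodes $b$ such that $e$ lies on some confluence with target $b$. Each node's outgoing edges are partitioned into bags: classes of the equivalence relation generated by $e\sim e'$ iff $\mathcal L_e\cap\mathcal L_{e'}\neq\emptyset$; bag label set $\mathcal L_B=\bigcup_{e\in B}\mathcal L_e$. The extraction width is $\mathrm{ew}_{\mathcal X}(G^{\mathcal X})=1+\max|\mathcal L_B|$ over all bags of all nodes. *)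

theory Defs
  imports Main
begin

definition dpath :: "('a \<times> 'a) set \<Rightarrow> 'a \<Rightarrow> 'a \<Rightarrow> 'a list \<Rightarrow> bool" where
  "dpath EXo a b p \<longleftrightarrow> length p \<ge> 2 \<and> hd p = a \<and> last p = b \<and> distinct p \<and>
     (\<forall>i. Suc i < length p \<longrightarrow> (p ! i, p ! Suc i) \<in> EXo)"

definition path_edges :: "'a list \<Rightarrow> ('a \<times> 'a) set" where
  "path_edges p = set (zip p (tl p))"

definition extraction_order :: "'a set \<Rightarrow> ('a \<times> 'a) set \<Rightarrow> ('a \<times> 'a) set \<Rightarrow> 'a \<Rightarrow> bool" where
  "extraction_order V E EXo s \<longleftrightarrow>
     s \<in> V \<and>
     (\<exists>R \<subseteq> E. EXo = (E - R) \<union> R\<inverse>) \<and>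
     acyclic EXo \<and>
     (\<forall>v\<in>V. (s, v) \<in> EXo\<^sup>*)"

definition confluence :: "('a \<times> 'a) set \<Rightarrow> 'a \<Rightarrow> 'a \<Rightarrow> 'a list \<Rightarrow> 'a list \<Rightarrow> bool" where
  "confluence EXo a b p1 p2 \<longleftrightarrow> dpath EXo a b p1 \<and> dpath EXo a b p2 \<and> p1 \<noteq> p2 \<and>
     set p1 \<inter> set p2 \<subseteq> {a, b}"

definition label_set :: "('a \<times> 'a) set \<Rightarrow> ('a \<times> 'a) \<Rightarrow> 'a set" where
  "label_set EXo e = {b. \<exists>a p1 p2. confluence EXo a b p1 p2 \<and>
                         (e \<in> path_edges p1 \<or> e \<in> path_edges p2)}"

definition out_edges :: "('a \<times> 'a) set \<Rightarrow> 'a \<Rightarrow> ('a \<times> 'a) set" where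
  "out_edges EXo v = {e \<in> EXo. fst e = v}"

definition bag_rel :: "('a \<times> 'a) set \<Rightarrow> 'a \<Rightarrow> (('a \<times> 'a) \<times> ('a \<times> 'a)) set" where
  "bag_rel EXo v = {(e, e'). e \<in> out_edges EXo v \<and> e' \<in> out_edges EXo v \<and>
                            label_set EXo e \<inter> label_set EXo e' \<noteq> {}}"

definition bags :: "('a \<times> 'a) set \<Rightarrow> 'a \<Rightarrow> ('a \<times> 'a) set set" where
  "bags EXo v = out_edges EXo v // ((bag_rel EXo v \<union> (bag_rel EXo v)\<inverse>)\<^sup>*)"

definition bag_label_set :: "('a \<times> 'a) set \<Rightarrow> ('a \<times> 'a) set \<Rightarrow> 'a set" where
  "bag_label_set EXo B = (\<Union>e\<in>B. label_set EXo e)"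

text \<open>Extraction width; the maximum over an empty family of bags is taken to be 0.\<close>
definition extraction_width :: "'a set \<Rightarrow> ('a \<times> 'a) set \<Rightarrow> nat" where
  "extraction_width V EXo =
     1 + Max ({0} \<union> {card (bag_label_set EXo B) | B v. v \<in> V \<and> B \<in> bags EXo v})"

definition half_wheel :: "'a set \<Rightarrow> ('a \<times> 'a) set \<Rightarrow> 'a \<Rightarrow> (nat \<Rightarrow> 'a) \<Rightarrow> nat \<Rightarrow> bool" where
  "half_wheel V E wc w n \<longleftrightarrow>
     V = insert wc (w ` {1..n}) \<and> inj_on w {1..n} \<and> wc \<notin> w ` {1..n} \<and>
     (\<forall>k\<in>{1..n}. ((wc, w k) \<in> E) \<noteq> ((w k, wc) \<in> E)) \<and>
     (\<forall>k\<in>{1..<n}. ((w k, w (Suc k)) \<in> E) \<noteq> ((w (Suc k), w k) \<in> E)) \<and>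
     E \<subseteq> {(wc, w k) | k. k \<in> {1..n}} \<union> {(w k, wc) | k. k \<in> {1..n}}
        \<union> {(w k, w (Suc k)) | k. k \<in> {1..<n}} \<union> {(w (Suc k), w k) | k. k \<in> {1..<n}}"

end

theory Submission
  imports Defs
begin

lemma pen_lemma:
  assumes dp: "dpath EXo a b p" and ne: "p \<noteq> [wc, b]"
    and noin: "\<And>y. (y, wc) \<notin> EXo"
  shows "\<exists>x. x \<noteq> wc \<and> (x, b) \<in> EXo"
proof -
  define m where "m = length p"
  have m2: "m \<ge> 2" and hd: "hd p = a" and lst: "last p = b"
    and ed: "\<And>i. Suc i < m \<Longrightarrow> (p ! i, p ! Suc i) \<in> EXo"
    using dp unfolding dpath_def m_def by auto
  have pne: "p \<noteq> []" using m2 m_def by auto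
  have lb: "p ! (m - 1) = b" using lst pne by (simp add: last_conv_nth m_def)
  have e1: "(p ! (m - 2), b) \<in> EXo" using ed[of "m - 2"] m2 lb
    by (metis Suc_diff_Suc Suc_1 diff_Suc_1 diff_less lessI less_le_trans numeral_2_eq_2 zero_less_Suc)
  show ?thesis
  proof (cases "p ! (m - 2) = wc")
    case False then show ?thesis using e1 by blast
  next
    case True
    show ?thesis
    proof (cases "m = 2")
      case True
      then obtain x1 x2 where "p = [x1, x2]" using m_def
        by (metis One_nat_def Suc_1 length_0_conv length_Suc_conv)
      then have False using ne lb \<open>p ! (m - 2) = wc\<close> True by simp
      then show ?thesis ..
    next
      case False
      then have "(p ! (m - 3), p ! (m - 2)) \<in> EXo" using ed[of "m - 3"] m2
        by (metis Suc_diff_Suc diff_Suc_1 diff_less le_neq_implies_less less_le_trans numeral_2_eq_2 numeral_3_eq_3 zero_less_Suc)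
      then show ?thesis using True noin by simp
    qed
  qed
qed


theorem lemma36:
  fixes V :: "'a set" and E EXo :: "('a \<times> 'a) set" and wc :: 'a and w :: "nat \<Rightarrow> 'a" and n :: nat
  assumes "half_wheel V E wc w n"
    and "extraction_order V E EXo wc"
  shows "extraction_width V EXo =
           card {w k | k. k \<in> {1..n} \<and>
                   ((1 < k \<and> (w (k - 1), w k) \<in> EXo) \<or> (k < n \<and> (w (k + 1), w k) \<in> EXo))} + 1"
proof -
  define S where "S = {w k | k. k \<in> {1..n} \<and>
                   ((1 < k \<and> (w (k - 1), w k) \<in> EXo) \<or> (k < n \<and> (w (k + 1), w k) \<in> EXo))}"
  have HW: "V = insert wc (w ` {1..n})" "inj_on w {1..n}" "wc \<notin> w ` {1..n}"
     "\<forall>k\<in>{1..n}. ((wc, w k) \<in> E) \<noteq> ((w k, wc) \<in> E)"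
     "\<forall>k\<in>{1..<n}. ((w k, w (Suc k)) \<in> E) \<noteq> ((w (Suc k), w k) \<in> E)"
     "E \<subseteq> {(wc, w k) | k. k \<in> {1..n}} \<union> {(w k, wc) | k. k \<in> {1..n}}
        \<union> {(w k, w (Suc k)) | k. k \<in> {1..<n}} \<union> {(w (Suc k), w k) | k. k \<in> {1..<n}}"
    using assms(1) unfolding half_wheel_def by auto
  obtain R where R: "R \<subseteq> E" "EXo = (E - R) \<union> R\<inverse>"
    using assms(2) unfolding extraction_order_def by auto
  have acyc: "acyclic EXo" and reach: "\<forall>v\<in>V. (wc, v) \<in> EXo\<^sup>*"
    using assms(2) unfolding extraction_order_def by auto
  have exo_E: "\<And>x y. (x, y) \<in> EXo \<Longrightarrow> (x, y) \<in> E \<or> (y, x) \<in> E" using R by auto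
  have E_exo: "\<And>x y. (x, y) \<in> E \<Longrightarrow> (x, y) \<in> EXo \<or> (y, x) \<in> EXo" using R by auto
  have inV: "\<And>x y. (x, y) \<in> EXo \<Longrightarrow> x \<in> V \<and> y \<in> V"
  proof -
    fix x y assume "(x, y) \<in> EXo"
    then have "(x, y) \<in> E \<or> (y, x) \<in> E" by (rule exo_E)
    then show "x \<in> V \<and> y \<in> V" using HW(1) HW(6) by fastforce
  qed
  have noin: "\<And>y. (y, wc) \<notin> EXo"
  proof
    fix y assume a: "(y, wc) \<in> EXo"
    then have "(wc, y) \<in> EXo\<^sup>*" using inV reach by blast
    then have "(wc, wc) \<in> EXo\<^sup>+" using a by (rule rtrancl_into_trancl1)
    then show False using acyc unfolding acyclic_def by blast
  qed
  have spoke: "\<And>k. k \<in> {1..n} \<Longrightarrow> (wc, w k) \<in> EXo"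
  proof -
    fix k assume k: "k \<in> {1..n}"
    have "(wc, w k) \<in> E \<or> (w k, wc) \<in> E" using HW(4) k by blast
    then show "(wc, w k) \<in> EXo" using E_exo noin by blast
  qed
  have rim: "\<And>x y. (x, y) \<in> EXo \<Longrightarrow> x \<noteq> wc \<Longrightarrow> y \<noteq> wc \<Longrightarrow>
      \<exists>k\<in>{1..<n}. (x = w k \<and> y = w (Suc k)) \<or> (x = w (Suc k) \<and> y = w k)"
  proof -
    fix x y assume a: "(x, y) \<in> EXo" "x \<noteq> wc" "y \<noteq> wc"
    then have "(x, y) \<in> E \<or> (y, x) \<in> E" using exo_E by blast
    then show "\<exists>k\<in>{1..<n}. (x = w k \<and> y = w (Suc k)) \<or> (x = w (Suc k) \<and> y = w k)"
      using HW(6) a(2,3) by blast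
  qed
  have finS: "finite S" unfolding S_def by simp
  have lab_sub: "\<And>e. label_set EXo e \<subseteq> S"
  proof
    fix e b assume "b \<in> label_set EXo e"
    then obtain a p1 p2 where c: "confluence EXo a b p1 p2" unfolding label_set_def by blast
    then have d1: "dpath EXo a b p1" and d2: "dpath EXo a b p2" and ne: "p1 \<noteq> p2"
      unfolding confluence_def by auto
    have "\<exists>x. x \<noteq> wc \<and> (x, b) \<in> EXo"
    proof (cases "p1 = [wc, b]")
      case True
      then have "p2 \<noteq> [wc, b]" using ne by simp
      then show ?thesis using pen_lemma[OF d2 _ noin] by blast
    next
      case False
      then show ?thesis using pen_lemma[OF d1 _ noin] by blast
    qed
    then obtain x where x: "x \<noteq> wc" "(x, b) \<in> EXo" by blast
    have "b \<noteq> wc" using x noin by blast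
    then obtain k where k: "k \<in> {1..<n}" "(x = w k \<and> b = w (Suc k)) \<or> (x = w (Suc k) \<and> b = w k)"
      using rim[OF x(2) x(1)] by blast
    from k(2) show "b \<in> S"
    proof
      assume "x = w k \<and> b = w (Suc k)"
      then show "b \<in> S" unfolding S_def using k(1) x(2)
        by (intro CollectI exI[of _ "Suc k"]) auto
    next
      assume "x = w (Suc k) \<and> b = w k"
      then show "b \<in> S" unfolding S_def using k(1) x(2)
        by (intro CollectI exI[of _ k]) auto
    qed
  qed
  have conf: "\<And>j k. j \<in> {1..n} \<Longrightarrow> k \<in> {1..n} \<Longrightarrow> (w j, w k) \<in> EXo \<Longrightarrow>
      w k \<in> label_set EXo (wc, w j) \<and> w k \<in> label_set EXo (wc, w k)"
  proof -
    fix j k assume j: "j \<in> {1..n}" and k: "k \<in> {1..n}" and e: "(w j, w k) \<in> EXo"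
    have jk: "w j \<noteq> w k" using e noin acyc unfolding acyclic_def by (metis r_into_trancl)
    have cj: "wc \<noteq> w j" "wc \<noteq> w k" using HW(3) j k by auto
    have c: "confluence EXo wc (w k) [wc, w j, w k] [wc, w k]"
      unfolding confluence_def dpath_def using jk cj e spoke[OF j] spoke[OF k]
      by (auto simp: less_Suc_eq nth_Cons')
    have "(wc, w j) \<in> path_edges [wc, w j, w k]" "(wc, w k) \<in> path_edges [wc, w k]"
      unfolding path_edges_def by auto
    then show "w k \<in> label_set EXo (wc, w j) \<and> w k \<in> label_set EXo (wc, w k)"
      unfolding label_set_def using c by blast
  qed
  define r where "r = (bag_rel EXo wc \<union> (bag_rel EXo wc)\<inverse>)\<^sup>*"
  have outs: "\<And>k. k \<in> {1..n} \<Longrightarrow> (wc, w k) \<in> out_edges EXo wc"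
    unfolding out_edges_def using spoke by auto
  have cons: "\<And>i. i \<in> {1..<n} \<Longrightarrow> ((wc, w i), (wc, w (Suc i))) \<in> bag_rel EXo wc"
  proof -
    fix i assume i: "i \<in> {1..<n}"
    have i1: "i \<in> {1..n}" "Suc i \<in> {1..n}" using i by auto
    have "(w i, w (Suc i)) \<in> EXo \<or> (w (Suc i), w i) \<in> EXo" using HW(5) i E_exo by blast
    then have "label_set EXo (wc, w i) \<inter> label_set EXo (wc, w (Suc i)) \<noteq> {}"
      using conf[OF i1(1) i1(2)] conf[OF i1(2) i1(1)] by blast
    then show "((wc, w i), (wc, w (Suc i))) \<in> bag_rel EXo wc"
      unfolding bag_rel_def using outs i1 by auto
  qed
  have chain: "\<And>k. k \<in> {1..n} \<Longrightarrow> ((wc, w 1), (wc, w k)) \<in> r"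
  proof -
    fix k assume "k \<in> {1..n}"
    then have "1 \<le> k" "k \<le> n" by auto
    then show "((wc, w 1), (wc, w k)) \<in> r"
    proof (induction k rule: dec_induct)
      case base then show ?case unfolding r_def by simp
    next
      case (step m)
      then have "((wc, w m), (wc, w (Suc m))) \<in> bag_rel EXo wc" using cons by auto
      then show ?case using step unfolding r_def
        by (meson UnI1 rtrancl.rtrancl_into_rtrancl Suc_leD)
    qed
  qed
  define M where "M = {card (bag_label_set EXo B) | B v. v \<in> V \<and> B \<in> bags EXo v}"
  have le: "\<And>y. y \<in> {0} \<union> M \<Longrightarrow> y \<le> card S"
  proof -
    fix y assume "y \<in> {0} \<union> M"
    then show "y \<le> card S"
    proof
      assume "y \<in> M"
      then obtain B v where "y = card (bag_label_set EXo B)" unfolding M_def by blast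
      moreover have "bag_label_set EXo B \<subseteq> S" unfolding bag_label_set_def using lab_sub by blast
      ultimately show ?thesis using finS by (simp add: card_mono)
    qed simp
  qed
  have mem: "card S \<in> {0} \<union> M"
  proof (cases "S = {}")
    case True then show ?thesis by simp
  next
    case False
    then have n1: "1 \<in> {1..n}" unfolding S_def by auto
    define B0 where "B0 = r `` {(wc, w 1)}"
    have "B0 \<in> bags EXo wc" unfolding bags_def B0_def r_def
      using outs[OF n1] by (rule quotientI)
    moreover have "S \<subseteq> bag_label_set EXo B0"
    proof
      fix b assume "b \<in> S"
      then obtain k where k: "k \<in> {1..n}" "b = w k"
        "(1 < k \<and> (w (k - 1), w k) \<in> EXo) \<or> (k < n \<and> (w (k + 1), w k) \<in> EXo)"
        unfolding S_def by blast
      have "w k \<in> label_set EXo (wc, w k)"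
      proof (cases "1 < k \<and> (w (k - 1), w k) \<in> EXo")
        case True
        then show ?thesis using conf[of "k - 1" k] k(1) by force
      next
        case False
        then have "k < n \<and> (w (k + 1), w k) \<in> EXo" using k(3) by blast
        then show ?thesis using conf[of "k + 1" k] k(1) by force
      qed
      moreover have "(wc, w k) \<in> B0" unfolding B0_def using chain[OF k(1)] by blast
      ultimately show "b \<in> bag_label_set EXo B0" unfolding bag_label_set_def using k(2) by blast
    qed
    moreover have "bag_label_set EXo B0 \<subseteq> S" unfolding bag_label_set_def using lab_sub by blast
    ultimately have "card S \<in> M" unfolding M_def using HW(1)
      by (intro CollectI exI[of _ B0] exI[of _ wc]) auto
    then show ?thesis by simp
  qed
  have fin: "finite ({0} \<union> M)" using le by (meson finite_atMost atMost_iff finite_subset subsetI)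
  have "Max ({0} \<union> M) = card S" using Max_eqI[OF fin le mem] .
  then show ?thesis unfolding extraction_width_def M_def S_def by simp
qed

end
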